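(* For integers $i,j\ge1$, the central element $m_{i+j,i}=m_{(i+j,i)}(L_1,\dots,L_4)\in\mathbb Z S_4$ satisfies \begin{align*} \langle 1,m_{i+j,i}\rangle&=\tfrac{1}{24}(1+(-1)^j)\big(6^i3^j+6^i2^j+3^{i+j}+3^i+(10+9(-1)^i)(2^{i+j}+2^i)+22(-1)^i\big),\\ \langle s_1,m_{i+j,i}\rangle&=\tfrac{1}{24}(1-(-1)^j)\big(3^j6^i+2^j6^i+3^{i+j}+3^i+(4+3(-1)^i)2^{i+j}+(4-3(-1)^i)2^i\big),\\ \langle s_{12},m_{i+j,i}\rangle&=\tfrac{1}{24}(1+(-1)^j)\big(3^j6^i+2^j6^i+3^{i+j}+3^i+2^{i+j}+2^i-2(-1)^i\big),\\ \langle s_{13},m_{i+j,i}\rangle&=\tfrac{1}{24}(1+(-1)^j)\big(3^j6^i+2^j6^i+3^{i+j}+3^i-(2+3(-1)^i)(2^i+2^{i+j})-2(-1)^i\big),\\ \langle s_{123},m_{i+j,i}\rangle&=\tfrac{1}{24}(1-(-1)^j)\big(3^j6^i+2^j6^i+3^i+3^{i+j}+3(-1)^i(2^i-2^{i+j})-2(2^i+2^{i+j})\big). \end{align*}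
   Context: $S_4$ is the symmetric group on $\{1,2,3,4\}$, $\mathbb Z S_4$ its integral group ring. Let $s_1=(1\,2)$, $s_2=(2\,3)$, $s_3=(3\,4)$, $s_{12}=s_1s_2$, $s_{13}=s_1s_3$, $s_{123}=s_1s_2s_3$. The Jucys–Murphy elements are $L_1=0$ and $L_i=\sum_{k=1}^{i-1}(k\ i)$ for $i=2,3,4$; they pairwise commute. For a partition $\mu=(\mu_1,\dots,\mu_r)$, $m_\mu(x_1,\dots,x_4)$ is the monomial symmetric polynomial: the sum of all distinct monomials $x_1^{\alpha_1}\cdots x_4^{\alpha_4}$ with $(\alpha_1,\dots,\alpha_4)$ a rearrangement of $(\mu_1,\dots,\mu_r,0,\dots,0)$. For $w\in S_4$ and $h\in\mathbb Z S_4$, $\langle w,h\rangle$ denotes the coefficient of $w$ in $h$; for central $h$ this equals the coefficient of the class sum of the conjugacy class of $w$. *)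

theory Defs
  imports "HOL-Combinatorics.Combinatorics" Complex_Main
begin

text \<open>The integral group ring Z S_4, elements represented as integer-valued
  functions on permutations of {1..4} (coefficient functions).\<close>

definition S4 :: "(nat \<Rightarrow> nat) set" where
  "S4 = {p. p permutes {1..4}}"

type_synonym grpring = "(nat \<Rightarrow> nat) \<Rightarrow> int"

definition gdelta :: "(nat \<Rightarrow> nat) \<Rightarrow> grpring" where
  "gdelta w = (\<lambda>v. if v = w then 1 else 0)"

text \<open>Multiplication: the product of basis elements u and v is u \<circ> v.\<close>
definition gmul :: "grpring \<Rightarrow> grpring \<Rightarrow> grpring" where
  "gmul f g = (\<lambda>w. \<Sum>u\<in>S4. f u * g (inv u \<circ> w))"

primrec gpow :: "grpring \<Rightarrow> nat \<Rightarrow> grpring" where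
  "gpow f 0 = gdelta id"
| "gpow f (Suc n) = gmul f (gpow f n)"

definition JM :: "nat \<Rightarrow> grpring" where
  "JM i = (\<lambda>w. \<Sum>k\<in>{1..<i}. gdelta (transpose k i) w)"

definition JM_monomial :: "(nat \<Rightarrow> nat) \<Rightarrow> grpring" where
  "JM_monomial a = foldr (\<lambda>k acc. gmul (gpow (JM k) (a k)) acc) [1,2,3,4] (gdelta id)"

definition pad4 :: "nat list \<Rightarrow> nat \<Rightarrow> nat" where
  "pad4 mu k = (if 1 \<le> k \<and> k \<le> length mu then mu ! (k - 1) else 0)"

definition rearrangements :: "nat list \<Rightarrow> (nat \<Rightarrow> nat) set" where
  "rearrangements mu = {a. \<exists>\<sigma>. \<sigma> permutes {1..4} \<and>
      (\<forall>k. a k = (if k \<in> {1..4} then pad4 mu (\<sigma> k) else 0))}"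

definition m_JM :: "nat list \<Rightarrow> grpring" where
  "m_JM mu = (\<lambda>w. \<Sum>a\<in>rearrangements mu. JM_monomial a w)"

definition s1 :: "nat \<Rightarrow> nat" where "s1 = transpose 1 2"
definition s2 :: "nat \<Rightarrow> nat" where "s2 = transpose 2 3"
definition s3 :: "nat \<Rightarrow> nat" where "s3 = transpose 3 4"

end

theory Submission
  imports Defs
begin


definition rdelta :: "(nat \<Rightarrow> nat) \<Rightarrow> (nat \<Rightarrow> nat) \<Rightarrow> real" where
  "rdelta p = (\<lambda>v. if v = p then 1 else 0)"
definition rmul :: "((nat \<Rightarrow> nat) \<Rightarrow> real) \<Rightarrow> ((nat \<Rightarrow> nat) \<Rightarrow> real) \<Rightarrow> (nat \<Rightarrow> nat) \<Rightarrow> real" where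
  "rmul f g = (\<lambda>w. \<Sum>u\<in>S4. f u * g (inv u \<circ> w))"
primrec rpow where
  "rpow f 0 = rdelta id"
| "rpow f (Suc n) = rmul f (rpow f n)"
definition R :: "grpring \<Rightarrow> (nat \<Rightarrow> nat) \<Rightarrow> real" where
  "R f = (\<lambda>w. real_of_int (f w))"

lemma R_gmul: "R (gmul f g) = rmul (R f) (R g)"
  by (simp add: fun_eq_iff R_def gmul_def rmul_def)

lemma R_gpow: "R (gpow f n) = rpow (R f) n"
proof (induction n)
  case 0 then show ?case by (simp add: R_def gdelta_def rdelta_def fun_eq_iff)
next
  case (Suc n) then show ?case by (simp add: R_gmul)
qed

lemma finite_S4: "finite S4"
  unfolding S4_def using finite_permutations[of "{1..4::nat}"] by simp

lemma S4_id: "id \<in> S4" by (simp add: S4_def permutes_id)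
lemma S4_comp: "p \<in> S4 \<Longrightarrow> q \<in> S4 \<Longrightarrow> p \<circ> q \<in> S4"
  by (simp add: S4_def permutes_compose)
lemma S4_inv: "p \<in> S4 \<Longrightarrow> inv p \<in> S4"
  by (simp add: S4_def permutes_inv)
lemma S4_bij: "p \<in> S4 \<Longrightarrow> bij p"
  by (simp add: S4_def permutes_bij)

lemma rmul_delta: "p \<in> S4 \<Longrightarrow> rmul (rdelta p) g w = g (inv p \<circ> w)"
proof -
  assume p: "p \<in> S4"
  have "rmul (rdelta p) g w = (\<Sum>u\<in>S4. (if p = u then g (inv u \<circ> w) else 0))"
    unfolding rmul_def rdelta_def by (rule sum.cong) auto
  also have "\<dots> = g (inv p \<circ> w)" using p finite_S4 by (simp add: sum.delta)
  finally show ?thesis .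
qed

lemma S4_ff: "v \<in> S4 \<Longrightarrow> v \<circ> (inv v \<circ> a) = a" "v \<in> S4 \<Longrightarrow> inv v \<circ> (v \<circ> a) = a"
  using S4_bij[of v] by (auto simp: fun_eq_iff bij_is_inj bij_is_surj surj_f_inv_f)

lemma S4_io: "v \<in> S4 \<Longrightarrow> v \<circ> inv v = id" "v \<in> S4 \<Longrightarrow> inv v \<circ> v = id"
  unfolding S4_def by (auto intro: permutes_inv_o)

lemma S4_io2: "v \<in> S4 \<Longrightarrow> x \<circ> v \<circ> inv v = x" "v \<in> S4 \<Longrightarrow> x \<circ> inv v \<circ> v = x"
  by (simp_all add: o_assoc[symmetric] S4_io)

lemma S4_inv_comp: "v \<in> S4 \<Longrightarrow> a \<in> S4 \<Longrightarrow> inv (inv v \<circ> a) = inv a \<circ> v"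
  using S4_bij[of v] S4_bij[of a] S4_bij[of "inv v"] S4_inv[of v]
  by (simp add: o_inv_distrib inv_inv_eq)

lemma rmul_assoc: "rmul (rmul f g) h w = rmul f (rmul g h) w"
proof -
  have "rmul (rmul f g) h w = (\<Sum>u\<in>S4. \<Sum>v\<in>S4. f v * (g (inv v \<circ> u) * h (inv u \<circ> w)))"
    unfolding rmul_def by (simp add: sum_distrib_right mult.assoc)
  also have "\<dots> = (\<Sum>v\<in>S4. \<Sum>u\<in>S4. f v * (g (inv v \<circ> u) * h (inv u \<circ> w)))"
    by (rule sum.swap)
  also have "\<dots> = (\<Sum>v\<in>S4. f v * (\<Sum>u\<in>S4. g u * h (inv u \<circ> (inv v \<circ> w))))"
  proof (rule sum.cong[OF refl])
    fix v assume v: "v \<in> S4"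
    have "(\<Sum>u\<in>S4. g (inv v \<circ> u) * h (inv u \<circ> w)) = (\<Sum>u\<in>S4. g u * h (inv u \<circ> (inv v \<circ> w)))"
      apply (rule sum.reindex_bij_witness[where i = "\<lambda>u. v \<circ> u" and j = "\<lambda>u. inv v \<circ> u"])
      using v by (auto simp: S4_io S4_io2 S4_comp S4_inv S4_inv_comp o_assoc)
    then show "(\<Sum>u\<in>S4. f v * (g (inv v \<circ> u) * h (inv u \<circ> w))) = f v * (\<Sum>u\<in>S4. g u * h (inv u \<circ> (inv v \<circ> w)))"
      by (simp add: sum_distrib_left[symmetric])
  qed
  also have "\<dots> = rmul f (rmul g h) w"
    unfolding rmul_def by (simp add: o_assoc)
  finally show ?thesis .
qed

lemma rmul_cong2: "(\<And>v. v \<in> S4 \<Longrightarrow> g v = g' v) \<Longrightarrow> w \<in> S4 \<Longrightarrow> rmul f g w = rmul f g' w"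
  unfolding rmul_def by (rule sum.cong) (auto intro: S4_comp S4_inv)

lemma rmul_sum2: "finite A \<Longrightarrow> rmul f (\<lambda>v. \<Sum>t\<in>A. d t * G t v) w = (\<Sum>t\<in>A. d t * rmul f (G t) w)"
  unfolding rmul_def by (simp add: sum_distrib_left sum_distrib_right mult_ac sum.swap[of _ S4])

lemma rmul_sum1: "rmul (\<lambda>u. \<Sum>m\<in>A. F m u) g w = (\<Sum>m\<in>A. rmul (F m) g w)"
  unfolding rmul_def by (simp add: sum_distrib_right sum.swap[of _ S4])

lemma rmul_scal2: "rmul f (\<lambda>v. c * G v) w = c * rmul f G w"
  unfolding rmul_def by (simp add: sum_distrib_left mult_ac)

lemma eigen_pow:
  assumes eig: "\<And>w. w \<in> S4 \<Longrightarrow> rmul L E w = c * E w"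
  shows "w \<in> S4 \<Longrightarrow> rmul (rpow L n) E w = c ^ n * E w"
proof (induction n arbitrary: w)
  case 0
  then show ?case by (simp add: rmul_delta S4_id)
next
  case (Suc n)
  have "rmul (rpow L (Suc n)) E w = rmul L (rmul (rpow L n) E) w"
    by (simp add: rmul_assoc)
  also have "\<dots> = rmul L (\<lambda>v. c ^ n * E v) w"
    by (rule rmul_cong2[OF Suc.IH Suc.prems])
  also have "\<dots> = c ^ n * (c * E w)" by (simp add: rmul_scal2 eig Suc.prems)
  finally show ?case by simp
qed


definition lperms :: "nat list list" where
"lperms = [[1,2,3,4], [1,2,4,3], [1,3,2,4], [1,3,4,2], [1,4,2,3], [1,4,3,2], [2,1,3,4], [2,1,4,3], [2,3,1,4], [2,3,4,1], [2,4,1,3], [2,4,3,1], [3,1,2,4], [3,1,4,2], [3,2,1,4], [3,2,4,1], [3,4,1,2], [3,4,2,1], [4,1,2,3], [4,1,3,2], [4,2,1,3], [4,2,3,1], [4,3,1,2], [4,3,2,1]]"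
definition Vs :: "int list list" where
"Vs = [[2,-2,-2,2,2,-2,-2,2,2,-2,-2,2,2,-2,-2,2,2,-2,-2,2,2,-2,-2,2],
 [6,2,-6,-2,-2,2,-6,-2,6,2,2,-2,6,2,-6,-2,-2,2,2,-2,-2,2,2,-2],
 [6,-2,3,-1,-1,-5,-6,2,-3,1,1,5,-3,1,3,-1,-4,4,1,5,-1,-5,4,-4],
 [4,-4,2,-2,-2,2,-4,4,-2,2,2,-2,-2,2,2,-2,4,-4,2,-2,-2,2,-4,4],
 [6,6,3,3,3,3,-6,-6,-3,-3,-3,-3,-3,-3,3,3,0,0,-3,-3,3,3,0,0],
 [6,-6,-3,3,3,-3,6,-6,-3,3,3,-3,-3,3,-3,3,0,0,3,-3,3,-3,0,0],
 [4,4,-2,-2,-2,-2,4,4,-2,-2,-2,-2,-2,-2,-2,-2,4,4,-2,-2,-2,-2,4,4],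
 [6,2,-3,-1,-1,5,6,2,-3,-1,-1,5,-3,-1,-3,-1,-4,-4,-1,5,-1,5,-4,-4],
 [6,-2,6,-2,-2,-2,6,-2,6,-2,-2,-2,6,-2,6,-2,-2,-2,-2,-2,-2,-2,-2,-2],
 [2,2,2,2,2,2,2,2,2,2,2,2,2,2,2,2,2,2,2,2,2,2,2,2]]"
definition Cs :: "int list list" where
"Cs = [[0,-1,-2,-3], [0,-1,-2,1], [0,-1,1,-2], [0,-1,1,0], [0,-1,1,2], [0,1,-1,-2], [0,1,-1,0], [0,1,-1,2], [0,1,2,-1], [0,1,2,3]]"
definition egl :: "int list \<Rightarrow> nat list \<Rightarrow> int" where
"egl V l = sum_list (map2 (\<lambda>l' v. if l' = l then v else 0) lperms V)"

lemma check_base: "list_all (\<lambda>wl. sum_list (map (\<lambda>t. egl (Vs!t) wl) [0..<10]) = (if wl = [1,2,3,4] then 48 else 0)) lperms"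
  by code_simp

lemma check_eig: "list_all (\<lambda>t. list_all (\<lambda>k. list_all (\<lambda>wl.
   sum_list (map (\<lambda>m. egl (Vs!t) (map (transpose m k) wl)) [1..<k]) = Cs!t!(k-1) * egl (Vs!t) wl) lperms) [2,3,4]) [0..<10]"
  by code_simp

lemma check_c1: "list_all (\<lambda>t. Cs!t!0 = 0) [0..<10]"
  by code_simp

definition Ef :: "nat \<Rightarrow> (nat \<Rightarrow> nat) \<Rightarrow> real" where
  "Ef t w = real_of_int (egl (Vs!t) (map w [1,2,3,4])) / 48"
definition cv :: "nat \<Rightarrow> nat \<Rightarrow> real" where
  "cv t k = real_of_int (Cs!t!(k-1))"

lemma quad_in: "a \<in> {1..4} \<Longrightarrow> b \<in> {1..4} \<Longrightarrow> c \<in> {1..4} \<Longrightarrow> d \<in> {1..4} \<Longrightarrow>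
   distinct [a,b,c,d] \<Longrightarrow> [a,b,c,d] \<in> set lperms"
proof -
  have e: "x \<in> {1..4} \<longleftrightarrow> x = 1 \<or> x = 2 \<or> x = 3 \<or> x = (4::nat)" for x by auto
  show "a \<in> {1..4} \<Longrightarrow> b \<in> {1..4} \<Longrightarrow> c \<in> {1..4} \<Longrightarrow> d \<in> {1..4} \<Longrightarrow>
   distinct [a,b,c,d] \<Longrightarrow> [a,b,c,d] \<in> set lperms"
    unfolding e by (elim disjE; simp add: lperms_def)
qed

lemma S4_list: "w \<in> S4 \<Longrightarrow> map w [1,2,3,4] \<in> set lperms"
proof -
  assume w: "w \<in> S4"
  then have p: "w permutes {1..4}" by (simp add: S4_def)
  have im: "w x \<in> {1..4}" if "x \<in> {1..4}" for x using permutes_in_image[OF p] that by simp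
  have inj: "inj w" using permutes_inj[OF p] .
  have "distinct [w 1, w 2, w 3, w 4]" using inj by (simp add: inj_eq)
  then show ?thesis using quad_in[OF im im im im] by simp
qed

lemma S4_eq_id: "w \<in> S4 \<Longrightarrow> (w = id) \<longleftrightarrow> map w [1,2,3,4] = [1,2,3,4]"
proof -
  assume w: "w \<in> S4"
  then have p: "w permutes {1..4}" by (simp add: S4_def)
  show ?thesis
  proof
    assume "map w [1,2,3,4] = [1,2,3,4]"
    then have h: "w 1 = 1" "w 2 = 2" "w 3 = 3" "w 4 = 4" by simp_all
    have "w x = x" for x
    proof (cases "x \<in> {1..4}")
      case True
      then have "x = 1 \<or> x = 2 \<or> x = 3 \<or> x = 4" by auto
      then show ?thesis using h by auto
    next
      case False
      then show ?thesis using permutes_not_in[OF p] by simp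
    qed
    then show "w = id" by (simp add: fun_eq_iff)
  qed simp
qed

lemma S4_transpose: "m \<in> {1..4} \<Longrightarrow> k \<in> {1..4} \<Longrightarrow> transpose m k \<in> S4"
  by (simp add: S4_def permutes_swap_id)

lemma base: "w \<in> S4 \<Longrightarrow> rdelta id w = (\<Sum>t\<in>{0..<10}. 1 * Ef t w)"
proof -
  assume w: "w \<in> S4"
  define wl where "wl = map w [1,2,3,4]"
  have wl: "wl \<in> set lperms" using S4_list[OF w] by (simp add: wl_def)
  have c: "sum_list (map (\<lambda>t. egl (Vs!t) wl) [0..<10]) = (if wl = [1,2,3,4] then 48 else 0)"
    using check_base wl unfolding list_all_iff by blast
  have s: "(\<Sum>t\<in>{0..<10}. egl (Vs!t) wl) = (if wl = [1,2,3,4] then 48 else 0)"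
    using c by (simp only: atLeastLessThan_upt sum_set_upt_conv_sum_list_nat)
  have "(\<Sum>t\<in>{0..<10}. 1 * Ef t w) = real_of_int (\<Sum>t\<in>{0..<10}. egl (Vs!t) wl) / 48"
    by (simp only: Ef_def wl_def sum_divide_distrib of_int_sum mult_1)
  also have "\<dots> = (if wl = [1,2,3,4] then 1 else 0)"
    by (simp only: s) simp
  also have "\<dots> = (if w = id then 1 else 0)"
    using S4_eq_id[OF w] by (simp add: wl_def)
  finally show ?thesis by (simp add: rdelta_def)
qed

lemma of_int_ifd: "real_of_int (if P then 1 else 0) = (if P then 1 else 0)" by simp

lemma R_JM: "R (JM k) = (\<lambda>u. \<Sum>m\<in>{1..<k}. rdelta (transpose m k) u)"
  by (intro ext) (simp add: R_def JM_def gdelta_def rdelta_def of_int_sum of_int_ifd)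

lemma JM_eig:
  assumes t: "t < 10" and k: "k \<in> {1,2,3,4}" and w: "w \<in> S4"
  shows "rmul (R (JM k)) (Ef t) w = cv t k * Ef t w"
proof -
  define wl where "wl = map w [1,2,3,4]"
  have wl: "wl \<in> set lperms" using S4_list[OF w] by (simp add: wl_def)
  have "rmul (R (JM k)) (Ef t) w = (\<Sum>m\<in>{1..<k}. Ef t (transpose m k \<circ> w))"
    unfolding R_JM rmul_sum1 using k
    by (intro sum.cong refl) (auto simp: rmul_delta S4_transpose)
  also have "\<dots> = (\<Sum>m\<in>{1..<k}. real_of_int (egl (Vs!t) (map (transpose m k) wl)) / 48)"
    by (intro sum.cong refl) (simp add: Ef_def wl_def)
  also have "\<dots> = real_of_int (\<Sum>m\<in>{1..<k}. egl (Vs!t) (map (transpose m k) wl)) / 48"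
    by (simp only: of_int_sum sum_divide_distrib)
  also have "\<dots> = cv t k * Ef t w"
  proof (cases "k = 1")
    case True
    then show ?thesis using check_c1 t by (simp add: list_all_iff cv_def)
  next
    case False
    then have "k \<in> set [2,3,4]" using k by auto
    moreover have "t \<in> set [0..<10]" using t by simp
    ultimately have "sum_list (map (\<lambda>m. egl (Vs!t) (map (transpose m k) wl)) [1..<k]) = Cs!t!(k-1) * egl (Vs!t) wl"
      using check_eig wl unfolding list_all_iff by blast
    then have "(\<Sum>m\<in>{1..<k}. egl (Vs!t) (map (transpose m k) wl)) = Cs!t!(k-1) * egl (Vs!t) wl"
      by (simp only: atLeastLessThan_upt sum_set_upt_conv_sum_list_nat)
    then show ?thesis by (simp add: cv_def Ef_def wl_def)
  qed
  finally show ?thesis .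
qed

lemma step:
  assumes k: "k \<in> {1,2,3,4}" and X: "\<And>v. v \<in> S4 \<Longrightarrow> X v = (\<Sum>t\<in>{0..<10}. d t * Ef t v)"
    and w: "w \<in> S4"
  shows "rmul (rpow (R (JM k)) n) X w = (\<Sum>t\<in>{0..<10}. (d t * cv t k ^ n) * Ef t w)"
proof -
  have "rmul (rpow (R (JM k)) n) X w = rmul (rpow (R (JM k)) n) (\<lambda>v. \<Sum>t\<in>{0..<10}. d t * Ef t v) w"
    by (rule rmul_cong2[OF X w])
  also have "\<dots> = (\<Sum>t\<in>{0..<10}. d t * rmul (rpow (R (JM k)) n) (Ef t) w)"
    by (simp add: rmul_sum2)
  also have "\<dots> = (\<Sum>t\<in>{0..<10}. (d t * cv t k ^ n) * Ef t w)"
    by (intro sum.cong refl) (simp add: eigen_pow[OF JM_eig[OF _ k] w])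
  finally show ?thesis .
qed

lemma mono:
  assumes w: "w \<in> S4"
  shows "R (JM_monomial a) w =
    (\<Sum>t\<in>{0..<10}. (((1 * cv t 4 ^ a 4) * cv t 3 ^ a 3) * cv t 2 ^ a 2) * cv t 1 ^ a 1 * Ef t w)"
proof -
  have e: "JM_monomial a = gmul (gpow (JM 1) (a 1)) (gmul (gpow (JM 2) (a 2))
      (gmul (gpow (JM 3) (a 3)) (gmul (gpow (JM 4) (a 4)) (gdelta id))))"
    by (simp add: JM_monomial_def)
  have h0: "R (gdelta id) v = (\<Sum>t\<in>{0..<10}. 1 * Ef t v)" if "v \<in> S4" for v
  proof -
    have "R (gdelta id) = rdelta id" by (simp add: fun_eq_iff R_def gdelta_def rdelta_def)
    then show ?thesis using base[OF that] by simp
  qed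
  have h4: "rmul (rpow (R (JM 4)) (a 4)) (R (gdelta id)) v = (\<Sum>t\<in>{0..<10}. (1 * cv t 4 ^ a 4) * Ef t v)"
    if "v \<in> S4" for v by (rule step[OF _ h0 that]) simp_all
  have h3: "rmul (rpow (R (JM 3)) (a 3)) (rmul (rpow (R (JM 4)) (a 4)) (R (gdelta id))) v
     = (\<Sum>t\<in>{0..<10}. ((1 * cv t 4 ^ a 4) * cv t 3 ^ a 3) * Ef t v)"
    if "v \<in> S4" for v by (rule step[OF _ h4 that]) simp_all
  have h2: "rmul (rpow (R (JM 2)) (a 2)) (rmul (rpow (R (JM 3)) (a 3)) (rmul (rpow (R (JM 4)) (a 4)) (R (gdelta id)))) v
     = (\<Sum>t\<in>{0..<10}. (((1 * cv t 4 ^ a 4) * cv t 3 ^ a 3) * cv t 2 ^ a 2) * Ef t v)"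
    if "v \<in> S4" for v by (rule step[OF _ h3 that]) simp_all
  have h1: "rmul (rpow (R (JM 1)) (a 1)) (rmul (rpow (R (JM 2)) (a 2)) (rmul (rpow (R (JM 3)) (a 3)) (rmul (rpow (R (JM 4)) (a 4)) (R (gdelta id))))) v
     = (\<Sum>t\<in>{0..<10}. ((((1 * cv t 4 ^ a 4) * cv t 3 ^ a 3) * cv t 2 ^ a 2) * cv t 1 ^ a 1) * Ef t v)"
    if "v \<in> S4" for v by (rule step[OF _ h2 that]) simp_all
  show ?thesis using h1[OF w] unfolding e by (simp add: R_gmul R_gpow)
qed



definition mk :: "nat \<Rightarrow> nat \<Rightarrow> nat \<Rightarrow> nat \<Rightarrow> nat \<Rightarrow> nat" where
  "mk p q x y = (\<lambda>k. if k = x then p else if k = y then q else 0)"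

definition pairs :: "(nat \<times> nat) list" where
  "pairs = [(1,2),(1,3),(1,4),(2,1),(2,3),(2,4),(3,1),(3,2),(3,4),(4,1),(4,2),(4,3)]"

lemma pairs_set: "set pairs = {(x,y). x \<in> {1..4} \<and> y \<in> {1..4} \<and> x \<noteq> y}"
proof -
  have e: "x \<in> {1..4} \<longleftrightarrow> x = 1 \<or> x = 2 \<or> x = 3 \<or> x = (4::nat)" for x by auto
  show ?thesis unfolding e pairs_def by auto
qed

lemma pad4_2: "pad4 [p,q] n = (if n = 1 then p else if n = 2 then q else 0)"
  by (auto simp: pad4_def nth_Cons' )

lemma rearr:
  assumes pq: "p \<noteq> q" "p > 0" "q > 0"
  shows "rearrangements [p,q] = (\<lambda>(x,y). mk p q x y) ` set pairs"
proof
  show "rearrangements [p,q] \<subseteq> (\<lambda>(x,y). mk p q x y) ` set pairs"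
  proof
    fix a assume "a \<in> rearrangements [p,q]"
    then obtain \<sigma> where s: "\<sigma> permutes {1..4}"
      and a: "\<And>k. a k = (if k \<in> {1..4} then pad4 [p,q] (\<sigma> k) else 0)"
      unfolding rearrangements_def by blast
    define x where "x = inv \<sigma> 1"
    define y where "y = inv \<sigma> 2"
    have si: "inv \<sigma> permutes {1..4}" using permutes_inv[OF s] .
    have x: "x \<in> {1..4}" unfolding x_def using permutes_in_image[OF si] by simp
    have y: "y \<in> {1..4}" unfolding y_def using permutes_in_image[OF si] by simp
    have sx: "\<sigma> x = 1" unfolding x_def using permutes_inverses(1)[OF s] by simp
    have sy: "\<sigma> y = 2" unfolding y_def using permutes_inverses(1)[OF s] by simp
    have xy: "x \<noteq> y" using sx sy by auto
    have "a = mk p q x y"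
    proof
      fix k
      show "a k = mk p q x y k"
      proof (cases "k \<in> {1..4}")
        case True
        have "\<sigma> k \<in> {1..4}" using permutes_in_image[OF s] True by simp
        moreover have "k \<noteq> x \<Longrightarrow> \<sigma> k \<noteq> 1" using sx permutes_inj[OF s] by (metis injD)
        moreover have "k \<noteq> y \<Longrightarrow> \<sigma> k \<noteq> 2" using sy permutes_inj[OF s] by (metis injD)
        ultimately show ?thesis using True sx sy by (auto simp: a mk_def pad4_2)
      next
        case False
        then show ?thesis using x y by (auto simp: a mk_def)
      qed
    qed
    then show "a \<in> (\<lambda>(x,y). mk p q x y) ` set pairs"
      using x y xy unfolding pairs_set by auto
  qed
next
  show "(\<lambda>(x,y). mk p q x y) ` set pairs \<subseteq> rearrangements [p,q]"
  proof
    fix a assume "a \<in> (\<lambda>(x,y). mk p q x y) ` set pairs"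
    then obtain x y where x: "x \<in> {1..4}" and y: "y \<in> {1..4}" and xy: "x \<noteq> y" and a: "a = mk p q x y"
      unfolding pairs_set by auto
    define \<tau> where "\<tau> = transpose x (1::nat)"
    define \<sigma> where "\<sigma> = transpose (\<tau> y) 2 \<circ> \<tau>"
    have ty: "\<tau> y \<in> {1..4}" "\<tau> y \<noteq> 1" using x y xy by (auto simp: \<tau>_def transpose_def)
    have s: "\<sigma> permutes {1..4}" unfolding \<sigma>_def \<tau>_def
      using x y ty by (intro permutes_compose permutes_swap_id) (auto simp: \<tau>_def)
    have sx: "\<sigma> x = 1" using ty by (simp add: \<sigma>_def \<tau>_def)
    have sy: "\<sigma> y = 2" by (simp add: \<sigma>_def)
    have "a k = (if k \<in> {1..4} then pad4 [p,q] (\<sigma> k) else 0)" for k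
    proof (cases "k \<in> {1..4}")
      case True
      have "\<sigma> k \<in> {1..4}" using permutes_in_image[OF s] True by simp
      moreover have "k \<noteq> x \<Longrightarrow> \<sigma> k \<noteq> 1" using sx permutes_inj[OF s] by (metis injD)
      moreover have "k \<noteq> y \<Longrightarrow> \<sigma> k \<noteq> 2" using sy permutes_inj[OF s] by (metis injD)
      ultimately show ?thesis using True sx sy by (auto simp: a mk_def pad4_2)
    next
      case False
      then show ?thesis using x y by (auto simp: a mk_def)
    qed
    then show "a \<in> rearrangements [p,q]" unfolding rearrangements_def using s by blast
  qed
qed

lemma mk_inj:
  assumes pq: "p \<noteq> q" "p > 0" "q > 0"
  shows "inj_on (\<lambda>(x,y). mk p q x y) (set pairs)"
proof (rule inj_onI, clarify)
  fix x y x' y'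
  assume xy: "(x,y) \<in> set pairs" and xy': "(x',y') \<in> set pairs" and e: "mk p q x y = mk p q x' y'"
  have "x \<noteq> y" "x' \<noteq> y'" using xy xy' unfolding pairs_set by auto
  have "mk p q x y x = p" "mk p q x y y = q" using \<open>x \<noteq> y\<close> by (auto simp: mk_def)
  then have "mk p q x' y' x = p" "mk p q x' y' y = q" using e by auto
  then show "x = x' \<and> y = y'" using pq \<open>x \<noteq> y\<close> \<open>x' \<noteq> y'\<close> unfolding mk_def by (auto split: if_splits)
qed

lemma main_formula:
  assumes pq: "p \<noteq> q" "p > 0" "q > 0" and w: "w \<in> S4"
  shows "real_of_int (m_JM [p,q] w) = (\<Sum>(x,y)\<leftarrow>pairs. \<Sum>t\<in>{0..<10}.
     (((1 * cv t 4 ^ mk p q x y 4) * cv t 3 ^ mk p q x y 3) * cv t 2 ^ mk p q x y 2) * cv t 1 ^ mk p q x y 1 * Ef t w)"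
proof -
  have "real_of_int (m_JM [p,q] w) = (\<Sum>a\<in>rearrangements [p,q]. R (JM_monomial a) w)"
    by (simp add: m_JM_def R_def)
  also have "\<dots> = (\<Sum>(x,y)\<in>set pairs. R (JM_monomial (mk p q x y)) w)"
    unfolding rearr[OF pq] by (subst sum.reindex[OF mk_inj[OF pq]]) (simp add: case_prod_beta')
  also have "\<dots> = (\<Sum>(x,y)\<leftarrow>pairs. R (JM_monomial (mk p q x y)) w)"
    by (simp add: sum_list_distinct_conv_sum_set pairs_def)
  also have "\<dots> = (\<Sum>(x,y)\<leftarrow>pairs. \<Sum>t\<in>{0..<10}.
     (((1 * cv t 4 ^ mk p q x y 4) * cv t 3 ^ mk p q x y 3) * cv t 2 ^ mk p q x y 2) * cv t 1 ^ mk p q x y 1 * Ef t w)"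
    by (simp add: mono[OF w])
  finally show ?thesis .
qed


lemma six: "(6::real)^i = 2^i * 3^i" by (simp add: power_mult_distrib[symmetric])

lemma S4_s: "s1 \<in> S4" "s2 \<in> S4" "s3 \<in> S4"
  by (simp_all add: s1_def s2_def s3_def S4_transpose)

lemma val1:
  fixes i j :: nat
  assumes "i \<ge> 1" and "j \<ge> 1"
  shows "real_of_int (m_JM [i + j, i] id) =
           1/24 * (1 + (-1)^j) * (6^i * 3^j + 6^i * 2^j + 3^(i+j) + 3^i
             + (10 + 9 * (-1)^i) * (2^(i+j) + 2^i) + 22 * (-1)^i)"
proof -
  have i: "0 < i" "0 < i + j" "0 < j" using assms by auto
  have z: "(0::real)^i = 0" "(0::real)^j = 0" "(0::real)^(i+j) = 0" using i by simp_all
  have e: "real_of_int (m_JM [i+j,i] id) = (\<Sum>(x,y)\<leftarrow>pairs. \<Sum>t\<in>{0..<10}.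
     (((1 * cv t 4 ^ mk (i+j) i x y 4) * cv t 3 ^ mk (i+j) i x y 3) * cv t 2 ^ mk (i+j) i x y 2) * cv t 1 ^ mk (i+j) i x y 1 * Ef t id)"
    using main_formula[of "i+j" i "id"] assms S4_id by simp
  show ?thesis
    unfolding e
    apply (simp add: pairs_def mk_def)
    apply (simp add: atLeastLessThan_upt sum_set_upt_conv_sum_list_nat upt_rec)
    apply (simp add: cv_def Cs_def Ef_def egl_def Vs_def lperms_def i s1_def s2_def s3_def transpose_def)
    apply (cases "even i"; cases "even j")
    apply (simp_all add: power_add six algebra_simps z i)
    done
qed

lemma val2:
  fixes i j :: nat
  assumes "i \<ge> 1" and "j \<ge> 1"
  shows "real_of_int (m_JM [i + j, i] s1) =
           1/24 * (1 - (-1)^j) * (3^j * 6^i + 2^j * 6^i + 3^(i+j) + 3^i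
             + (4 + 3 * (-1)^i) * 2^(i+j) + (4 - 3 * (-1)^i) * 2^i)"
proof -
  have i: "0 < i" "0 < i + j" "0 < j" using assms by auto
  have z: "(0::real)^i = 0" "(0::real)^j = 0" "(0::real)^(i+j) = 0" using i by simp_all
  have e: "real_of_int (m_JM [i+j,i] s1) = (\<Sum>(x,y)\<leftarrow>pairs. \<Sum>t\<in>{0..<10}.
     (((1 * cv t 4 ^ mk (i+j) i x y 4) * cv t 3 ^ mk (i+j) i x y 3) * cv t 2 ^ mk (i+j) i x y 2) * cv t 1 ^ mk (i+j) i x y 1 * Ef t s1)"
    using main_formula[of "i+j" i "s1"] assms S4_s(1) by simp
  show ?thesis
    unfolding e
    apply (simp add: pairs_def mk_def)
    apply (simp add: atLeastLessThan_upt sum_set_upt_conv_sum_list_nat upt_rec)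
    apply (simp add: cv_def Cs_def Ef_def egl_def Vs_def lperms_def i s1_def s2_def s3_def transpose_def)
    apply (cases "even i"; cases "even j")
    apply (simp_all add: power_add six algebra_simps z i)
    done
qed

lemma val3:
  fixes i j :: nat
  assumes "i \<ge> 1" and "j \<ge> 1"
  shows "real_of_int (m_JM [i + j, i] (s1 \<circ> s2)) =
           1/24 * (1 + (-1)^j) * (3^j * 6^i + 2^j * 6^i + 3^(i+j) + 3^i
             + 2^(i+j) + 2^i - 2 * (-1)^i)"
proof -
  have i: "0 < i" "0 < i + j" "0 < j" using assms by auto
  have z: "(0::real)^i = 0" "(0::real)^j = 0" "(0::real)^(i+j) = 0" using i by simp_all
  have e: "real_of_int (m_JM [i+j,i] (s1 \<circ> s2)) = (\<Sum>(x,y)\<leftarrow>pairs. \<Sum>t\<in>{0..<10}.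
     (((1 * cv t 4 ^ mk (i+j) i x y 4) * cv t 3 ^ mk (i+j) i x y 3) * cv t 2 ^ mk (i+j) i x y 2) * cv t 1 ^ mk (i+j) i x y 1 * Ef t (s1 \<circ> s2))"
    using main_formula[of "i+j" i "(s1 \<circ> s2)"] assms S4_comp[OF S4_s(1) S4_s(2)] by simp
  show ?thesis
    unfolding e
    apply (simp add: pairs_def mk_def)
    apply (simp add: atLeastLessThan_upt sum_set_upt_conv_sum_list_nat upt_rec)
    apply (simp add: cv_def Cs_def Ef_def egl_def Vs_def lperms_def i s1_def s2_def s3_def transpose_def)
    apply (cases "even i"; cases "even j")
    apply (simp_all add: power_add six algebra_simps z i)
    done
qed

lemma val4:
  fixes i j :: nat
  assumes "i \<ge> 1" and "j \<ge> 1"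
  shows "real_of_int (m_JM [i + j, i] (s1 \<circ> s3)) =
           1/24 * (1 + (-1)^j) * (3^j * 6^i + 2^j * 6^i + 3^(i+j) + 3^i
             - (2 + 3 * (-1)^i) * (2^i + 2^(i+j)) - 2 * (-1)^i)"
proof -
  have i: "0 < i" "0 < i + j" "0 < j" using assms by auto
  have z: "(0::real)^i = 0" "(0::real)^j = 0" "(0::real)^(i+j) = 0" using i by simp_all
  have e: "real_of_int (m_JM [i+j,i] (s1 \<circ> s3)) = (\<Sum>(x,y)\<leftarrow>pairs. \<Sum>t\<in>{0..<10}.
     (((1 * cv t 4 ^ mk (i+j) i x y 4) * cv t 3 ^ mk (i+j) i x y 3) * cv t 2 ^ mk (i+j) i x y 2) * cv t 1 ^ mk (i+j) i x y 1 * Ef t (s1 \<circ> s3))"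
    using main_formula[of "i+j" i "(s1 \<circ> s3)"] assms S4_comp[OF S4_s(1) S4_s(3)] by simp
  show ?thesis
    unfolding e
    apply (simp add: pairs_def mk_def)
    apply (simp add: atLeastLessThan_upt sum_set_upt_conv_sum_list_nat upt_rec)
    apply (simp add: cv_def Cs_def Ef_def egl_def Vs_def lperms_def i s1_def s2_def s3_def transpose_def)
    apply (cases "even i"; cases "even j")
    apply (simp_all add: power_add six algebra_simps z i)
    done
qed

lemma val5:
  fixes i j :: nat
  assumes "i \<ge> 1" and "j \<ge> 1"
  shows "real_of_int (m_JM [i + j, i] (s1 \<circ> s2 \<circ> s3)) =
           1/24 * (1 - (-1)^j) * (3^j * 6^i + 2^j * 6^i + 3^i + 3^(i+j)
             + 3 * (-1)^i * (2^i - 2^(i+j)) - 2 * (2^i + 2^(i+j)))"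
proof -
  have i: "0 < i" "0 < i + j" "0 < j" using assms by auto
  have z: "(0::real)^i = 0" "(0::real)^j = 0" "(0::real)^(i+j) = 0" using i by simp_all
  have e: "real_of_int (m_JM [i+j,i] (s1 \<circ> s2 \<circ> s3)) = (\<Sum>(x,y)\<leftarrow>pairs. \<Sum>t\<in>{0..<10}.
     (((1 * cv t 4 ^ mk (i+j) i x y 4) * cv t 3 ^ mk (i+j) i x y 3) * cv t 2 ^ mk (i+j) i x y 2) * cv t 1 ^ mk (i+j) i x y 1 * Ef t (s1 \<circ> s2 \<circ> s3))"
    using main_formula[of "i+j" i "(s1 \<circ> s2 \<circ> s3)"] assms S4_comp[OF S4_comp[OF S4_s(1) S4_s(2)] S4_s(3)] by simp
  show ?thesis
    unfolding e
    apply (simp add: pairs_def mk_def)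
    apply (simp add: atLeastLessThan_upt sum_set_upt_conv_sum_list_nat upt_rec)
    apply (simp add: cv_def Cs_def Ef_def egl_def Vs_def lperms_def i s1_def s2_def s3_def transpose_def)
    apply (cases "even i"; cases "even j")
    apply (simp_all add: power_add six algebra_simps z i)
    done
qed

theorem proposition2p6:
  fixes i j :: nat
  assumes "i \<ge> 1" and "j \<ge> 1"
  shows "(real_of_int (m_JM [i + j, i] id) =
           1/24 * (1 + (-1)^j) * (6^i * 3^j + 6^i * 2^j + 3^(i+j) + 3^i
             + (10 + 9 * (-1)^i) * (2^(i+j) + 2^i) + 22 * (-1)^i)) \<and>
      (real_of_int (m_JM [i + j, i] s1) =
           1/24 * (1 - (-1)^j) * (3^j * 6^i + 2^j * 6^i + 3^(i+j) + 3^i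
             + (4 + 3 * (-1)^i) * 2^(i+j) + (4 - 3 * (-1)^i) * 2^i)) \<and>
      (real_of_int (m_JM [i + j, i] (s1 \<circ> s2)) =
           1/24 * (1 + (-1)^j) * (3^j * 6^i + 2^j * 6^i + 3^(i+j) + 3^i
             + 2^(i+j) + 2^i - 2 * (-1)^i)) \<and>
      (real_of_int (m_JM [i + j, i] (s1 \<circ> s3)) =
           1/24 * (1 + (-1)^j) * (3^j * 6^i + 2^j * 6^i + 3^(i+j) + 3^i
             - (2 + 3 * (-1)^i) * (2^i + 2^(i+j)) - 2 * (-1)^i)) \<and>
      (real_of_int (m_JM [i + j, i] (s1 \<circ> s2 \<circ> s3)) =
           1/24 * (1 - (-1)^j) * (3^j * 6^i + 2^j * 6^i + 3^i + 3^(i+j)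
             + 3 * (-1)^i * (2^i - 2^(i+j)) - 2 * (2^i + 2^(i+j))))"
  using val1[OF assms] val2[OF assms] val3[OF assms] val4[OF assms] val5[OF assms] by blast

end
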